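(* Let $P$ be a finite poset, $R$ a commutative unital ring, and $D$ a derivation of $I^3(P,R)$. Then for all $x<z<y$ in $P$, $D(e_{xzy})=0$.
   Context: For a finite poset $P$, $P^3_\le=\{(x,y,z)\in P^3: x\le y\le z\}$, and $I^3(P,R)$ is the $R$-module of functions $f:P^3_\le\to R$ with multiplication $(fg)(x_1,x_2,x_3)=\sum f(x_1,y_1,y_2)g(y_1,y_2,x_3)$ over all $x_1\le y_1\le x_2\le y_2\le x_3$. For $x\le y\le z$, $e_{xyz}$ is the function equal to $1$ at $(x,y,z)$ and $0$ elsewhere. A derivation is an $R$-linear map $D:I^3(P,R)\to I^3(P,R)$ with $D(fg)=D(f)g+fD(g)$. *)

theory Defs
  imports Main
begin

type_synonym ('a, 'r) fun3 = "'a \<Rightarrow> 'a \<Rightarrow> 'a \<Rightarrow> 'r"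

definition I3 :: "('a::{finite,order}, 'r::comm_ring_1) fun3 set" where
  "I3 = {f. \<forall>x y z. \<not> (x \<le> y \<and> y \<le> z) \<longrightarrow> f x y z = 0}"

definition mult3 :: "('a::{finite,order}, 'r::comm_ring_1) fun3 \<Rightarrow> ('a, 'r) fun3 \<Rightarrow> ('a, 'r) fun3" where
  "mult3 f g = (\<lambda>x1 x2 x3.
     if x1 \<le> x2 \<and> x2 \<le> x3 then
       (\<Sum>(y1, y2) \<in> {(y1, y2). x1 \<le> y1 \<and> y1 \<le> x2 \<and> x2 \<le> y2 \<and> y2 \<le> x3}.
          f x1 y1 y2 * g y1 y2 x3)
     else 0)"

definition add3 :: "('a, 'r::comm_ring_1) fun3 \<Rightarrow> ('a, 'r) fun3 \<Rightarrow> ('a, 'r) fun3" where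
  "add3 f g = (\<lambda>x y z. f x y z + g x y z)"

definition smult3 :: "'r::comm_ring_1 \<Rightarrow> ('a, 'r) fun3 \<Rightarrow> ('a, 'r) fun3" where
  "smult3 r f = (\<lambda>x y z. r * f x y z)"

definition zero3 :: "('a, 'r::comm_ring_1) fun3" where
  "zero3 = (\<lambda>x y z. 0)"

definition e3 :: "'a::{finite,order} \<Rightarrow> 'a \<Rightarrow> 'a \<Rightarrow> ('a, 'r::comm_ring_1) fun3" where
  "e3 x y z = (\<lambda>a b c. if a = x \<and> b = y \<and> c = z then 1 else 0)"

definition derivation3 :: "(('a::{finite,order}, 'r::comm_ring_1) fun3 \<Rightarrow> ('a, 'r) fun3) \<Rightarrow> bool" where
  "derivation3 D \<longleftrightarrow>
     (\<forall>f \<in> I3. D f \<in> I3) \<and>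
     (\<forall>f \<in> I3. \<forall>g \<in> I3. D (add3 f g) = add3 (D f) (D g)) \<and>
     (\<forall>r. \<forall>f \<in> I3. D (smult3 r f) = smult3 r (D f)) \<and>
     (\<forall>f \<in> I3. \<forall>g \<in> I3. D (mult3 f g) = add3 (mult3 (D f) g) (mult3 f (D g)))"

end

theory Submission
  imports Defs
begin

lemma mult_e_right:
  "mult3 h (e3 a b c) p q r =
     (if r = c \<and> p \<le> a \<and> a \<le> q \<and> q \<le> b \<and> b \<le> c then h p a b else 0)"
proof -
  let ?S = "{(y1, y2). p \<le> y1 \<and> y1 \<le> q \<and> q \<le> y2 \<and> y2 \<le> r}"
  have fin: "finite ?S" by (rule finite_subset[of _ UNIV]) auto
  have "(\<Sum>(y1, y2) \<in> ?S. h p y1 y2 * e3 a b c y1 y2 r)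
      = (\<Sum>y \<in> ?S. if y = (a, b) then (if r = c then h p a b else 0) else 0)"
    by (rule sum.cong) (auto simp: e3_def split: if_splits)
  also have "\<dots> = (if (a, b) \<in> ?S then (if r = c then h p a b else 0) else 0)"
    using fin by (simp add: sum.delta')
  finally show ?thesis
    unfolding mult3_def by (auto intro: order_trans)
qed

lemma mult_e_left:
  "mult3 (e3 a b c) h p q r =
     (if p = a \<and> a \<le> b \<and> b \<le> q \<and> q \<le> c \<and> c \<le> r then h b c r else 0)"
proof -
  let ?S = "{(y1, y2). p \<le> y1 \<and> y1 \<le> q \<and> q \<le> y2 \<and> y2 \<le> r}"
  have fin: "finite ?S" by (rule finite_subset[of _ UNIV]) auto
  have "(\<Sum>(y1, y2) \<in> ?S. e3 a b c p y1 y2 * h y1 y2 r)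
      = (\<Sum>y \<in> ?S. if y = (b, c) then (if p = a then h b c r else 0) else 0)"
    by (rule sum.cong) (auto simp: e3_def split: if_splits)
  also have "\<dots> = (if (b, c) \<in> ?S then (if p = a then h b c r else 0) else 0)"
    using fin by (simp add: sum.delta')
  finally show ?thesis
    unfolding mult3_def by (auto intro: order_trans)
qed

lemma deriv_mult: "derivation3 D \<Longrightarrow> f \<in> I3 \<Longrightarrow> g \<in> I3 \<Longrightarrow>
   D (mult3 f g) = add3 (mult3 (D f) g) (mult3 f (D g))"
  unfolding derivation3_def by blast

lemma deriv_add: "derivation3 D \<Longrightarrow> f \<in> I3 \<Longrightarrow> g \<in> I3 \<Longrightarrow>
   D (add3 f g) = add3 (D f) (D g)"
  unfolding derivation3_def by blast

lemma deriv_I3: "derivation3 D \<Longrightarrow> f \<in> I3 \<Longrightarrow> D f \<in> I3"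
  unfolding derivation3_def by blast

lemma e3_I3: "a \<le> b \<Longrightarrow> b \<le> c \<Longrightarrow> e3 a b c \<in> I3"
  unfolding I3_def e3_def by auto

lemma zero3_I3: "zero3 \<in> I3"
  unfolding I3_def zero3_def by auto

lemma D_zero:
  assumes "derivation3 D"
  shows "D zero3 = zero3"
proof -
  have "D (smult3 0 zero3) = smult3 0 (D zero3)"
    using assms zero3_I3 unfolding derivation3_def by blast
  moreover have "smult3 0 zero3 = (zero3 :: ('a,'b) fun3)"
    unfolding smult3_def zero3_def by simp
  moreover have "smult3 0 (D zero3) = (zero3 :: ('a,'b) fun3)"
    unfolding smult3_def zero3_def by simp
  ultimately show ?thesis by simp
qed

lemma sum_I3: "(\<forall>t\<in>T. G t \<in> I3) \<Longrightarrow> (\<lambda>a b c. \<Sum>t\<in>T. G t a b c) \<in> I3"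
  unfolding I3_def by auto

lemma D_sum:
  assumes D: "derivation3 D" and "finite T"
  shows "(\<forall>t\<in>T. G t \<in> I3) \<Longrightarrow>
     D (\<lambda>a b c. \<Sum>t\<in>T. G t a b c) = (\<lambda>a b c. \<Sum>t\<in>T. D (G t) a b c)"
  using assms(2)
proof (induction T rule: finite_induct)
  case empty
  have "(\<lambda>a b c. \<Sum>t\<in>{}. G t a b c) = zero3" unfolding zero3_def by simp
  moreover have "(\<lambda>a b c. \<Sum>t\<in>{}. D (G t) a b c) = zero3" unfolding zero3_def by simp
  ultimately show ?case using D_zero[OF D] by simp
next
  case (insert s F)
  have eq: "(\<lambda>a b c. \<Sum>t\<in>insert s F. G t a b c) = add3 (G s) (\<lambda>a b c. \<Sum>t\<in>F. G t a b c)"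
    using insert by (simp add: add3_def)
  have "G s \<in> I3" "(\<lambda>a b c. \<Sum>t\<in>F. G t a b c) \<in> I3"
    using insert sum_I3[of F G] by auto
  then have "D (add3 (G s) (\<lambda>a b c. \<Sum>t\<in>F. G t a b c))
     = add3 (D (G s)) (D (\<lambda>a b c. \<Sum>t\<in>F. G t a b c))"
    using deriv_add[OF D] by blast
  then show ?case using eq insert by (simp add: add3_def)
qed

lemma e3_fact: "a \<le> t \<Longrightarrow> t \<le> c \<Longrightarrow> e3 a t c = mult3 (e3 a t t) (e3 t t c)"
  by (rule ext)+ (simp only: mult_e_right, auto simp: e3_def intro: order_antisym)

lemma lemM:
  assumes D: "derivation3 D" and "a \<le> t" "t \<le> c" "q \<noteq> t"
  shows "D (e3 a t c) p q r = 0"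
proof -
  have "D (e3 a t c) = add3 (mult3 (D (e3 a t t)) (e3 t t c)) (mult3 (e3 a t t) (D (e3 t t c)))"
    using deriv_mult[OF D, of "e3 a t t" "e3 t t c"] assms e3_I3 e3_fact by (metis order_refl)
  then show ?thesis using assms(4)
    by (simp add: add3_def mult_e_right mult_e_left) (auto dest: order_antisym)
qed

lemma lemA:
  assumes D: "derivation3 D" and xz: "x < z"
  shows "D (e3 x z z) x z z = 0 \<and> D (e3 x x z) x x z = 0"
proof -
  let ?S = "mult3 (e3 x x z) (e3 x z z)"
  have S: "?S = (\<lambda>p q r. \<Sum>t\<in>{x..z}. e3 x t z p q r)"
  proof (rule ext)+
    fix p q r
    have "(\<Sum>t\<in>{x..z}. e3 x t z p q r) = (\<Sum>t\<in>{x..z}. if t = q then (if p = x \<and> r = z then 1 else 0) else 0)"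
      by (rule sum.cong) (auto simp: e3_def split: if_splits)
    also have "\<dots> = (if q \<in> {x..z} then (if p = x \<and> r = z then 1 else 0) else 0)"
      by (simp add: sum.delta')
    finally show "?S p q r = (\<Sum>t\<in>{x..z}. e3 x t z p q r)"
      unfolding mult_e_left using xz by (auto simp: e3_def)
  qed
  have I: "\<forall>t\<in>{x..z}. e3 x t z \<in> I3" by (auto intro: e3_I3)
  have DS: "D ?S = (\<lambda>p q r. \<Sum>t\<in>{x..z}. D (e3 x t z) p q r)"
  proof -
    have "D (\<lambda>p q r. \<Sum>t\<in>{x..z}. e3 x t z p q r) = (\<lambda>p q r. \<Sum>t\<in>{x..z}. D (e3 x t z) p q r)"
      by (rule D_sum[OF D, of "{x..z}" "\<lambda>t. e3 x t z"]) (use I in auto)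
    then show ?thesis by (simp only: S)
  qed
  have val: "D ?S x q z = D (e3 x q z) x q z" if "x \<le> q" "q \<le> z" for q
  proof -
    have "(\<Sum>t\<in>{x..z}. D (e3 x t z) x q z) = (\<Sum>t\<in>{x..z}. if t = q then D (e3 x q z) x q z else 0)"
      by (rule sum.cong) (auto simp: lemM[OF D])
    also have "\<dots> = D (e3 x q z) x q z" using that by (simp add: sum.delta')
    finally show ?thesis using DS by simp
  qed
  have "D ?S = add3 (mult3 (D (e3 x x z)) (e3 x z z)) (mult3 (e3 x x z) (D (e3 x z z)))"
  proof -
    have "e3 x x z \<in> I3" "e3 x z z \<in> I3" using e3_I3 xz by (auto intro: less_imp_le)
    then show ?thesis using deriv_mult[OF D] by blast
  qed
  then have val2: "D ?S x q z = D (e3 x x z) x x z + D (e3 x z z) x z z" if "x \<le> q" "q \<le> z" for q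
    using that by (simp add: add3_def mult_e_right mult_e_left)
  have 1: "D (e3 x z z) x z z = D (e3 x x z) x x z + D (e3 x z z) x z z"
    using val[of z] val2[of z] xz by (metis less_imp_le order_refl)
  have 2: "D (e3 x x z) x x z = D (e3 x x z) x x z + D (e3 x z z) x z z"
    using val[of x] val2[of x] xz by (metis less_imp_le order_refl)
  have a: "D (e3 x x z) x x z = 0" using 1 by (metis add_cancel_left_left)
  have b: "D (e3 x z z) x z z = 0" using 2 by (metis add_cancel_right_right)
  from a b show ?thesis by blast
qed

theorem corollary4p6:
  fixes D :: "('a::{finite,order}, 'r::comm_ring_1) fun3 \<Rightarrow> ('a, 'r) fun3"
    and x z y :: 'a
  assumes "derivation3 D"
    and "x < z" and "z < y"
  shows "D (e3 x z y) = zero3"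
proof -
  note D = assms(1)
  have mulD: "D (mult3 f g) = add3 (mult3 (D f) g) (mult3 f (D g))" if "f \<in> I3" "g \<in> I3" for f g
    using deriv_mult[OF D] that by blast
  have DI: "D f \<in> I3" if "f \<in> I3" for f using deriv_I3[OF D] that by blast
  have xz: "x \<le> z" and zy: "z \<le> y" using assms by auto
  have alpha: "D (e3 x z z) p z z = 0" for p
  proof (cases "p = x")
    case True then show ?thesis using lemA[OF D assms(2)] by simp
  next
    case False
    show ?thesis
    proof (cases "p \<le> z")
      case False
      have "D (e3 x z z) \<in> I3" using DI e3_I3 xz by auto
      then show ?thesis using False unfolding I3_def by auto
    next
      case True
      have z0: "mult3 (e3 p p z) (e3 x z z) = zero3"
        using \<open>p \<noteq> x\<close> by (intro ext) (simp only: mult_e_right, auto simp: e3_def zero3_def)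
      have "zero3 = add3 (mult3 (D (e3 p p z)) (e3 x z z)) (mult3 (e3 p p z) (D (e3 x z z)))"
      proof -
        have i1: "e3 p p z \<in> I3" "e3 x z z \<in> I3" using True xz by (auto intro: e3_I3)
        have "D (mult3 (e3 p p z) (e3 x z z)) = add3 (mult3 (D (e3 p p z)) (e3 x z z)) (mult3 (e3 p p z) (D (e3 x z z)))"
          using mulD[OF i1] .
        then show ?thesis using z0 D_zero[OF D] by metis
      qed
      then have "zero3 p p z = add3 (mult3 (D (e3 p p z)) (e3 x z z)) (mult3 (e3 p p z) (D (e3 x z z))) p p z"
        by simp
      moreover have "\<not> (p \<le> x \<and> x \<le> p)" using \<open>p \<noteq> x\<close> by (auto dest: order_antisym)
      ultimately show ?thesis using True
        by (simp add: zero3_def add3_def mult_e_right mult_e_left)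
    qed
  qed
  have beta: "D (e3 z z y) z z r = 0" for r
  proof (cases "r = y")
    case True then show ?thesis using lemA[OF D assms(3)] by simp
  next
    case False
    show ?thesis
    proof (cases "z \<le> r")
      case False
      have "D (e3 z z y) \<in> I3" using DI e3_I3 zy by auto
      then show ?thesis using False unfolding I3_def by auto
    next
      case True
      have z0: "mult3 (e3 z z y) (e3 z r r) = zero3"
        using \<open>r \<noteq> y\<close> by (intro ext) (simp only: mult_e_right, auto simp: e3_def zero3_def)
      have "zero3 = add3 (mult3 (D (e3 z z y)) (e3 z r r)) (mult3 (e3 z z y) (D (e3 z r r)))"
      proof -
        have i1: "e3 z z y \<in> I3" "e3 z r r \<in> I3" using True zy by (auto intro: e3_I3)
        have "D (mult3 (e3 z z y) (e3 z r r)) = add3 (mult3 (D (e3 z z y)) (e3 z r r)) (mult3 (e3 z z y) (D (e3 z r r)))"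
          using mulD[OF i1] .
        then show ?thesis using z0 D_zero[OF D] by metis
      qed
      then have "zero3 z r r = add3 (mult3 (D (e3 z z y)) (e3 z r r)) (mult3 (e3 z z y) (D (e3 z r r))) z r r"
        by simp
      moreover have "\<not> (r \<le> y \<and> y \<le> r)" using \<open>r \<noteq> y\<close> by (auto dest: order_antisym)
      ultimately show ?thesis using True
        by (simp add: zero3_def add3_def mult_e_right mult_e_left)
    qed
  qed
  have "D (e3 x z y) = add3 (mult3 (D (e3 x z z)) (e3 z z y)) (mult3 (e3 x z z) (D (e3 z z y)))"
    using mulD e3_fact[OF xz zy] e3_I3 xz zy by (metis order_refl)
  then show ?thesis
    by (intro ext) (simp add: add3_def mult_e_right mult_e_left alpha beta zero3_def)
qed

end
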